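(* Let $\mathcal H$ be a separable complex Hilbert space, $A\in L(\mathcal H)^+$ and $T\in L(\mathcal H)$. If $T$ is an $A$-idempotent then $I-T$ is an $A$-idempotent; and if $T$ is an $A$-projection then $I-T$ is an $A$-projection.
   Context: $L(\mathcal H)^+$ denotes the positive (semidefinite) bounded operators. For $A\in L(\mathcal H)^+$, $\|x\|_A=\langle Ax,x\rangle^{1/2}$. $T\in L(\mathcal H)$ is an $A$-idempotent if $AT^2=AT$. $T$ is an $A$-projection if $\|y-Ty\|_A\le\|y-s\|_A$ for all $y\in\mathcal H$ and all $s\in\overline{R(T)}$ (i.e. $T$ is an $A$-projection into the closure of its range). *)

theory Defs
  imports "HOL-Analysis.Analysis"
begin

text \<open>HOL-Analysis only has real inner product spaces.\<close>

class complex_inner = real_normed_vector +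
  fixes scaleC :: "complex \<Rightarrow> 'a \<Rightarrow> 'a"
    and cinner :: "'a \<Rightarrow> 'a \<Rightarrow> complex"
  assumes scaleC_add_right: "scaleC a (x + y) = scaleC a x + scaleC a y"
    and scaleC_add_left: "scaleC (a + b) x = scaleC a x + scaleC b x"
    and scaleC_scaleC: "scaleC a (scaleC b x) = scaleC (a * b) x"
    and scaleC_one: "scaleC 1 x = x"
    and scaleR_scaleC: "scaleR r x = scaleC (complex_of_real r) x"
    and cinner_add_left: "cinner (x + y) z = cinner x z + cinner y z"
    and cinner_scaleC_left: "cinner (scaleC a x) y = a * cinner x y"
    and cinner_commute: "cinner y x = cnj (cinner x y)"
    and cinner_ge_zero: "0 \<le> Re (cinner x x)"
    and cinner_eq_zero_iff: "cinner x x = 0 \<longleftrightarrow> x = 0"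
    and norm_eq_sqrt_cinner: "norm x = sqrt (Re (cinner x x))"

class complex_hilbert = complex_inner + complete_space

definition bounded_clinear :: "('a::complex_inner \<Rightarrow> 'a) \<Rightarrow> bool" where
  "bounded_clinear T \<longleftrightarrow>
     (\<forall>x y. T (x + y) = T x + T y) \<and>
     (\<forall>c x. T (scaleC c x) = scaleC c (T x)) \<and>
     (\<exists>K. \<forall>x. norm (T x) \<le> norm x * K)"

definition positive_op :: "('a::complex_inner \<Rightarrow> 'a) \<Rightarrow> bool" where
  "positive_op A \<longleftrightarrow> bounded_clinear A \<and>
     (\<forall>x. Im (cinner (A x) x) = 0 \<and> 0 \<le> Re (cinner (A x) x))"

definition anorm :: "('a::complex_inner \<Rightarrow> 'a) \<Rightarrow> 'a \<Rightarrow> real" where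
  "anorm A x = sqrt (Re (cinner (A x) x))"

definition A_idempotent :: "('a \<Rightarrow> 'a) \<Rightarrow> ('a \<Rightarrow> 'a) \<Rightarrow> bool" where
  "A_idempotent A T \<longleftrightarrow> A \<circ> (T \<circ> T) = A \<circ> T"

definition A_projection :: "('a::complex_inner \<Rightarrow> 'a) \<Rightarrow> ('a \<Rightarrow> 'a) \<Rightarrow> bool" where
  "A_projection A T \<longleftrightarrow>
     (\<forall>y. \<forall>s \<in> closure (range T). anorm A (y - T y) \<le> anorm A (y - s))"

end

theory Submission
  imports Defs
begin

context complex_inner
begin

lemma cinner_diff_left': "cinner (x - y) z = cinner x z - cinner y z"
  using cinner_add_left[of "x - y" y z] by simp

lemma cinner_add_right': "cinner x (y + z) = cinner x y + cinner x z"
  by (metis cinner_commute cinner_add_left complex_cnj_add)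

lemma cinner_scaleC_right': "cinner x (scaleC a y) = cnj a * cinner x y"
  by (metis cinner_commute cinner_scaleC_left complex_cnj_mult complex_cnj_cnj)

lemma norm_sq_Re: "(norm x)^2 = Re (cinner x x)"
  using norm_eq_sqrt_cinner[of x] cinner_ge_zero[of x] by simp

lemma Re_cinner_polar: "Re (cinner x y) = ((norm (x + y))^2 - (norm x)^2 - (norm y)^2) / 2"
proof -
  have "cinner (x+y) (x+y) = cinner x x + cinner x y + cinner y x + cinner y y"
    by (simp add: cinner_add_left cinner_add_right')
  moreover have "Re (cinner y x) = Re (cinner x y)" by (subst cinner_commute) simp
  ultimately show ?thesis by (simp add: norm_sq_Re)
qed

end

lemma bclin_linear:
  assumes "bounded_clinear T"
  shows "bounded_linear T"
proof -
  from assms have add: "\<And>x y. T (x + y) = T x + T y"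
    and sc: "\<And>c x. T (scaleC c x) = scaleC c (T x)"
    and bd: "\<exists>K. \<forall>x. norm (T x) \<le> norm x * K"
    unfolding bounded_clinear_def by blast+
  from bd obtain K where K: "\<And>x. norm (T x) \<le> norm x * K" by blast
  show ?thesis
  proof (rule bounded_linear_intro[OF add])
    fix r x show "T (r *\<^sub>R x) = r *\<^sub>R T x" by (simp add: scaleR_scaleC sc)
  next
    fix x show "norm (T x) \<le> norm x * K" by (rule K)
  qed
qed

lemma hermitian:
  assumes "positive_op A"
  shows "cinner (A y) x = cnj (cinner (A x) y)"
proof -
  have L: "bounded_linear A" using assms bclin_linear unfolding positive_op_def by blast
  have sc: "\<And>c x. A (scaleC c x) = scaleC c (A x)"
    using assms unfolding positive_op_def bounded_clinear_def by blast
  have im: "\<And>u. Im (cinner (A u) u) = 0" using assms unfolding positive_op_def by blast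
  define p where "p = cinner (A x) y"
  define q where "q = cinner (A y) x"
  have e1: "cinner (A (x + y)) (x + y) = cinner (A x) x + p + q + cinner (A y) y"
    by (simp add: linear_add[OF bounded_linear.linear[OF L]] cinner_add_left cinner_add_right' p_def q_def)
  have e2: "cinner (A (x + scaleC \<i> y)) (x + scaleC \<i> y)
      = cinner (A x) x - \<i> * p + \<i> * q + cinner (A y) y"
    by (simp add: linear_add[OF bounded_linear.linear[OF L]] sc cinner_add_left cinner_add_right'
        cinner_scaleC_left cinner_scaleC_right' p_def q_def algebra_simps)
  have "Im (p + q) = 0" using e1 im[of "x+y"] im[of x] im[of y] by simp
  moreover have "Re (q - p) = 0" using e2 im[of "x + scaleC \<i> y"] im[of x] im[of y] by simp
  ultimately have "q = cnj p" by (simp add: complex_eq_iff)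
  thus ?thesis by (simp add: p_def q_def)
qed

theorem mainTheorem2:
  fixes A T :: "'a::complex_hilbert \<Rightarrow> 'a"
  assumes separable: "\<exists>D::'a set. countable D \<and> closure D = UNIV"
    and A_pos: "positive_op A"
    and T_bdd: "bounded_clinear T"
  shows "(A_idempotent A T \<longrightarrow> A_idempotent A (\<lambda>x. x - T x)) \<and>
         (A_projection A T \<longrightarrow> A_projection A (\<lambda>x. x - T x))"
proof -
  have LT: "linear T" using bclin_linear[OF T_bdd] bounded_linear.linear by blast
  have LA: "linear A" using A_pos bclin_linear bounded_linear.linear unfolding positive_op_def by blast
  have BA: "bounded_linear A" using A_pos bclin_linear unfolding positive_op_def by blast
  have scT: "\<And>c x. T (scaleC c x) = scaleC c (T x)"
    using T_bdd unfolding bounded_clinear_def by blast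
  have scA: "\<And>c x. A (scaleC c x) = scaleC c (A x)"
    using A_pos unfolding positive_op_def bounded_clinear_def by blast
  have Qge: "\<And>u. 0 \<le> Re (cinner (A u) u)" using A_pos unfolding positive_op_def by blast
  have P1: "A_idempotent A T \<longrightarrow> A_idempotent A (\<lambda>x. x - T x)"
  proof
    assume h: "A_idempotent A T"
    have h': "\<And>x. A (T (T x)) = A (T x)" using h unfolding A_idempotent_def
      by (metis comp_apply)
    show "A_idempotent A (\<lambda>x. x - T x)" unfolding A_idempotent_def
    proof
      fix x
      show "(A \<circ> ((\<lambda>x. x - T x) \<circ> (\<lambda>x. x - T x))) x = (A \<circ> (\<lambda>x. x - T x)) x"
        using h'[of x] by (simp add: linear_diff[OF LT] linear_diff[OF LA])
    qed
  qed
  have expand: "\<And>u v. cinner (A (u + v)) (u + v)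
      = cinner (A u) u + cinner (A u) v + cnj (cinner (A u) v) + cinner (A v) v"
  proof -
    fix u v
    have "cinner (A v) u = cnj (cinner (A u) v)" by (rule hermitian[OF A_pos])
    thus "cinner (A (u + v)) (u + v)
      = cinner (A u) u + cinner (A u) v + cnj (cinner (A u) v) + cinner (A v) v"
      by (simp add: linear_add[OF LA] cinner_add_left cinner_add_right')
  qed
  have P2: "A_projection A T \<longrightarrow> A_projection A (\<lambda>x. x - T x)"
  proof
    assume h: "A_projection A T"
    have orth: "cinner (A (y - T y)) (T w) = 0" for y w
    proof -
      define a where "a = y - T y"
      define b where "b = T w"
      define c where "c = cinner (A a) b"
      have key: "Re (cinner (A a) a) \<le> Re (cinner (A (a + scaleC l b)) (a + scaleC l b))" for l
      proof -
        have "T (y - scaleC l w) \<in> closure (range T)" by (meson closure_subset rangeI subsetD)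
        hence "anorm A (y - T y) \<le> anorm A (y - T (y - scaleC l w))" using h
          unfolding A_projection_def by blast
        moreover have "y - T (y - scaleC l w) = a + scaleC l b"
          by (simp add: a_def b_def linear_diff[OF LT] scT)
        ultimately have "sqrt (Re (cinner (A a) a)) \<le> sqrt (Re (cinner (A (a + scaleC l b)) (a + scaleC l b)))"
          by (simp add: anorm_def a_def)
        thus ?thesis by simp
      qed
      define q where "q = Re (cinner (A b) b)"
      have qge: "q \<ge> 0" using Qge q_def by simp
      define n where "n = (Re c)^2 + (Im c)^2"
      define t where "t = - 1 / (q + 1)"
      have "Re (cinner (A (a + scaleC (t * c) b)) (a + scaleC (t * c) b))
          = Re (cinner (A a) a) + 2 * t * n + t^2 * n * q"
      proof -
        have "cinner (A a) (scaleC (t * c) b) = t * (cnj c * c)"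
          by (simp add: cinner_scaleC_right' c_def)
        moreover have "cinner (A (scaleC (t*c) b)) (scaleC (t*c) b) = (t*c) * cnj (t*c) * cinner (A b) b"
          by (simp add: scA cinner_scaleC_left cinner_scaleC_right')
        ultimately show ?thesis
          unfolding expand
          by (simp add: q_def n_def power2_eq_square algebra_simps)
      qed
      with key[of "t * c"] have "0 \<le> 2 * t * n + t^2 * n * q" by simp
      hence "0 \<le> n * (t * (2 + t * q))" by (simp add: algebra_simps power2_eq_square)
      moreover have "t < 0" using qge by (simp add: t_def)
      moreover have "2 + t * q > 0"
      proof -
        have "t * q = - (q / (q+1))" by (simp add: t_def)
        moreover have "q / (q+1) < 1" using qge by simp
        ultimately show ?thesis by linarith
      qed
      moreover have "t * (2 + t * q) < 0" using calculation(2,3) by (simp add: mult_neg_pos)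
      ultimately have "n \<le> 0"
        by (smt (verit) mult_pos_neg)
      hence "c = 0" unfolding n_def
        by (metis add_nonneg_nonneg complex_eq_0 order_antisym_conv zero_le_power2)
      thus ?thesis by (simp add: c_def a_def b_def)
    qed
    show "A_projection A (\<lambda>x. x - T x)" unfolding A_projection_def
    proof (intro allI ballI)
      fix y s
      assume s: "s \<in> closure (range (\<lambda>x. x - T x))"
      define S where "S = {s. Re (cinner (A (T y)) (T y)) \<le> Re (cinner (A (y - s)) (y - s))}"
      have contQ: "continuous_on UNIV (\<lambda>u. Re (cinner (A u) u))"
      proof -
        have "(\<lambda>u. Re (cinner (A u) u)) = (\<lambda>u. ((norm (A u + u))^2 - (norm (A u))^2 - (norm u)^2) / 2)"
          by (simp add: Re_cinner_polar)
        moreover have "continuous_on UNIV A" using BA linear_continuous_on by blast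
        moreover have "continuous_on UNIV (\<lambda>u. ((norm (A u + u))^2 - (norm (A u))^2 - (norm u)^2) / 2)"
          using \<open>continuous_on UNIV A\<close> by (intro continuous_intros) auto
        ultimately show ?thesis by metis
      qed
      have "closed S" unfolding S_def
        by (intro closed_Collect_le continuous_intros continuous_on_compose2[OF contQ]) auto
      moreover have "range (\<lambda>x. x - T x) \<subseteq> S"
      proof
        fix s assume "s \<in> range (\<lambda>x. x - T x)"
        then obtain z where z: "s = z - T z" by blast
        define v where "v = (y - z) - T (y - z)"
        have ys: "y - s = T y + v" by (simp add: z v_def linear_diff[OF LT])
        have "cinner (A v) (T y) = 0" unfolding v_def by (rule orth)
        hence "cinner (A (T y)) v = 0" using hermitian[OF A_pos] by (metis complex_cnj_zero)
        hence "Re (cinner (A (y - s)) (y - s)) = Re (cinner (A (T y)) (T y)) + Re (cinner (A v) v)"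
          unfolding ys expand by simp
        thus "s \<in> S" unfolding S_def using Qge[of v] by simp
      qed
      ultimately have "s \<in> S" using s closure_minimal by blast
      hence "Re (cinner (A (T y)) (T y)) \<le> Re (cinner (A (y - s)) (y - s))" by (simp add: S_def)
      thus "anorm A (y - (y - T y)) \<le> anorm A (y - s)" by (simp add: anorm_def)
    qed
  qed
  show ?thesis using P1 P2 by blast
qed

end
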